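(* Let $k_1,k_2,\dots$ be i.i.d. random variables with values in $\{1,2,\dots\}$ and $\mathbb{P}(k_n=m)=\frac{1}{m(m+1)}$ for $m\ge 1$. Define record times $n_1=1$ and, for $j\ge1$, $n_{j+1}=\min\{n>n_j: k_n>k_{n_j}\}$ (so $k_{n_j}>\max_{n<n_j}k_n$). Then almost surely, for all sufficiently large $j$: (i) $k_n<k_{n_j}$ for every $n$ with $n_j<n<n_{j+1}$ (i.e. the value $k_{n_j}$ does not reappear before the next record), and (ii) $k_{n_j}>2^{j/3}$. *)

theory Defs
  imports "HOL-Probability.Probability"
begin

text \<open>Record times of a sequence kk (indexed from 1): record_time kk j is n_j for j >= 1;
  n_1 = 1 and n_(j+1) = min {n > n_j. kk n > kk n_j}. The value at j = 0 is unused.\<close>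
fun record_time :: "(nat \<Rightarrow> nat) \<Rightarrow> nat \<Rightarrow> nat" where
  "record_time kk 0 = 0"
| "record_time kk (Suc 0) = 1"
| "record_time kk (Suc (Suc j)) =
     (LEAST n. record_time kk (Suc j) < n \<and> kk (record_time kk (Suc j)) < kk n)"

end

theory Submission
  imports Defs "HOL-Probability.Probability"
begin
definition pp :: "nat \<Rightarrow> real" where
  "pp m = (if m = 0 then 0 else 1 / (real m * (real m + 1)))"

lemma sum_pp: "(\<Sum>m\<le>c. pp m) = real c / (real c + 1)"
proof (induction c)
  case 0 then show ?case by (simp add: pp_def)
next
  case (Suc c)
  have "(\<Sum>m\<le>Suc c. pp m) = real c / (real c + 1) + 1/((real c+1)*(real c+2))"
    using Suc by (simp add: pp_def add_ac)
  also have "\<dots> = (real c + 1)/(real c + 2)"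
    by (simp add: divide_simps) (simp add: algebra_simps)
  finally show ?case by (simp add: add_ac)
qed

lemma sum_pp_gt: "c \<le> N \<Longrightarrow> (\<Sum>m\<in>{c<..N}. pp m) = 1/(real c+1) - 1/(real N+1)"
proof (induction N)
  case 0 then show ?case by simp
next
  case (Suc N)
  show ?case
  proof (cases "c = Suc N")
    case True then show ?thesis by simp
  next
    case False
    then have "c \<le> N" using Suc by simp
    have "{c<..Suc N} = insert (Suc N) {c<..N}" using \<open>c \<le> N\<close> by auto
    then have "(\<Sum>m\<in>{c<..Suc N}. pp m) = 1/(real c+1) - 1/(real N+1) + 1/((real N+1)*(real N+2))"
      using Suc.IH[OF \<open>c \<le> N\<close>] by (simp add: pp_def add_ac)
    also have "\<dots> = 1/(real c+1) - 1/(real N+2)"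
      by (simp add: divide_simps) (simp add: algebra_simps)
    finally show ?thesis by (simp add: add_ac)
  qed
qed

lemma sum_3: "c \<le> N \<Longrightarrow> (\<Sum>x\<in>{c<..N}. 2/(real x*(real x+1)*(real x+2))) = 1/((real c+1)*(real c+2)) - 1/((real N+1)*(real N+2))"
proof (induction N)
  case 0 then show ?case by simp
next
  case (Suc N)
  show ?case
  proof (cases "c = Suc N")
    case True then show ?thesis by simp
  next
    case False
    then have "c \<le> N" using Suc by simp
    have "{c<..Suc N} = insert (Suc N) {c<..N}" using \<open>c \<le> N\<close> by auto
    then have "(\<Sum>x\<in>{c<..Suc N}. 2/(real x*(real x+1)*(real x+2))) = 1/((real c+1)*(real c+2)) - 1/((real N+1)*(real N+2)) + 2/((real N+1)*(real N+2)*(real N+3))"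
      using Suc.IH[OF \<open>c \<le> N\<close>] by (simp add: add_ac)
    also have "\<dots> = 1/((real c+1)*(real c+2)) - 1/((real N+2)*(real N+3))"
      by (simp add: divide_simps) (simp add: algebra_simps)
    finally show ?thesis by (simp add: add_ac)
  qed
qed

lemma sum_4: "1 \<le> c \<Longrightarrow> c \<le> U \<Longrightarrow> (\<Sum>x\<in>{c<..U}. 1/(real x^2*(real x+1))) + 1/(2*real U*(real U+1)) \<le> 1/(2*real c*(real c+1))"
proof (induction U)
  case 0 then show ?case by simp
next
  case (Suc U)
  show ?case
  proof (cases "c = Suc U")
    case True then show ?thesis by simp
  next
    case False
    then have cU: "c \<le> U" using Suc by simp
    have "{c<..Suc U} = insert (Suc U) {c<..U}" using cU by auto
    then have e: "(\<Sum>x\<in>{c<..Suc U}. 1/(real x^2*(real x+1))) + 1/(2*real (Suc U)*(real (Suc U)+1))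
       = (\<Sum>x\<in>{c<..U}. 1/(real x^2*(real x+1))) + (1/((real U+1)^2*(real U+2)) + 1/(2*(real U+1)*(real U+2)))"
      by (simp add: add_ac)
    have "1/((real U+1)^2*(real U+2)) + 1/(2*(real U+1)*(real U+2)) \<le> 1/(2*real U*(real U+1))"
    proof -
      have u: "real U \<ge> 1" using Suc.prems cU by simp
      have "1/((real U+1)^2*(real U+2)) \<le> 1/(real U*(real U+1)*(real U+2))"
        using u by (intro divide_left_mono mult_right_mono) (auto simp: power2_eq_square intro!: mult_pos_pos)
      also have "1/(real U*(real U+1)*(real U+2)) = 1/(2*real U*(real U+1)) - 1/(2*(real U+1)*(real U+2))"
        using u by (simp add: divide_simps) (simp add: algebra_simps)
      finally show ?thesis by simp
    qed
    then show ?thesis unfolding e using Suc.IH[OF Suc.prems(1) cU] by linarith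
  qed
qed

lemma Q_Suc: "(\<integral>\<^sup>+xs. F xs \<partial>replicate_pmf (Suc T) p) = (\<integral>\<^sup>+x. \<integral>\<^sup>+xs. F (x#xs) \<partial>replicate_pmf T p \<partial>p)"
  by simp

fun recs :: "nat \<Rightarrow> nat list \<Rightarrow> nat set" where
  "recs c [] = {}"
| "recs c (x#xs) = (if c < x then insert x (recs x xs) else recs c xs)"

lemma recs_gt: "y \<in> recs c xs \<Longrightarrow> c < y"
  by (induction c xs rule: recs.induct) (auto split: if_splits)

definition GA :: "nat \<Rightarrow> nat \<Rightarrow> real" where
  "GA N c = (real N + 2) / (real (min c N) + 2)"

lemma GA_ge1: "GA N c \<ge> 1"
  unfolding GA_def by (simp add: divide_simps)

lemma GA_le: "GA N c \<le> real N + 2"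
  unfolding GA_def by (simp add: divide_simps)

lemma prob_pmf_le:
  assumes pmfp: "\<And>m. pmf p m = pp m"
  shows "measure_pmf.prob p {..c} = real c / (real c + 1)"
  by (simp add: measure_measure_pmf_finite pmfp sum_pp)

lemma integral_bA:
  assumes pmfp: "\<And>m. pmf p m = pp m" and cN: "c < N"
  shows "measure_pmf.expectation p (\<lambda>x. if x \<le> c then GA N c else if x \<le> N then 2 * GA N x else 1) = GA N c"
proof -
  define b where "b = (\<lambda>x. if x \<le> c then GA N c else if x \<le> N then 2 * GA N x else 1)"
  define b' where "b' = (\<lambda>x. b x - 1)"
  have bnd: "norm (b' x) \<le> 2 * (real N + 2)" for x
  proof -
    have "GA N c \<le> real N + 2" "GA N x \<le> real N + 2" "GA N c \<ge> 1" "GA N x \<ge> 1"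
      using GA_ge1 GA_le by blast+
    then show ?thesis unfolding b'_def b_def by (auto simp: abs_if)
  qed
  have int1: "integrable p b'"
    by (rule measure_pmf.integrable_const_bound[where B="2 * (real N + 2)"]) (use bnd in auto)
  have "measure_pmf.expectation p b = measure_pmf.expectation p (\<lambda>x. b' x + 1)"
    unfolding b'_def by simp
  also have "\<dots> = measure_pmf.expectation p b' + 1"
    using int1 by (subst Bochner_Integration.integral_add) auto
  also have "measure_pmf.expectation p b' = (\<Sum>x\<in>{..N}. b' x * pmf p x)"
    using cN by (intro integral_measure_pmf_real) (auto simp: b'_def b_def split: if_splits)
  also have "\<dots> = (\<Sum>x\<in>{..c}. b' x * pmf p x) + (\<Sum>x\<in>{c<..N}. b' x * pmf p x)"
  proof -
    have "{..N} = {..c} \<union> {c<..N}" using cN by auto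
    then show ?thesis by (simp add: sum.union_disjoint ivl_disj_int)
  qed
  also have "(\<Sum>x\<in>{..c}. b' x * pmf p x) = (GA N c - 1) * (real c / (real c + 1))"
    by (simp add: b'_def b_def pmfp sum_distrib_left[symmetric] sum_pp)
  also have "(\<Sum>x\<in>{c<..N}. b' x * pmf p x) = (real N + 2) * (\<Sum>x\<in>{c<..N}. 2/(real x*(real x+1)*(real x+2))) - (\<Sum>x\<in>{c<..N}. pp x)"
  proof -
    have "(\<Sum>x\<in>{c<..N}. b' x * pmf p x) = (\<Sum>x\<in>{c<..N}. (real N + 2) * (2/(real x*(real x+1)*(real x+2))) - pp x)"
    proof (rule sum.cong)
      fix x assume x: "x \<in> {c<..N}"
      then have "x \<noteq> 0" "min x N = x" by auto
      then show "b' x * pmf p x = (real N + 2) * (2/(real x*(real x+1)*(real x+2))) - pp x"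
        using x by (simp add: b'_def b_def pmfp pp_def GA_def divide_simps)
    qed simp
    then show ?thesis by (simp add: sum_subtractf sum_distrib_left)
  qed
  also have "(\<Sum>x\<in>{c<..N}. 2/(real x*(real x+1)*(real x+2))) = 1/((real c+1)*(real c+2)) - 1/((real N+1)*(real N+2))"
    using cN by (intro sum_3) simp
  also have "(\<Sum>x\<in>{c<..N}. pp x) = 1/(real c+1) - 1/(real N+1)"
    using cN by (intro sum_pp_gt) simp
  finally have "measure_pmf.expectation p b = (GA N c - 1) * (real c / (real c + 1)) +
      ((real N + 2) * (1/((real c+1)*(real c+2)) - 1/((real N+1)*(real N+2))) - (1/(real c+1) - 1/(real N+1))) + 1" .
  also have "\<dots> = GA N c"
    using cN by (simp add: GA_def divide_simps) (simp add: algebra_simps)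
  finally show ?thesis unfolding b_def .
qed

lemma recA:
  assumes pmfp: "\<And>m. pmf p m = pp m"
  shows "(\<integral>\<^sup>+xs. ennreal (2 ^ card (recs c xs \<inter> {..N})) \<partial>replicate_pmf T p) \<le> ennreal (GA N c)"
proof (induction T arbitrary: c)
  case 0
  then show ?case using GA_ge1[of N c] by (simp add: ennreal_leI del: ennreal_1 add: ennreal_1[symmetric])
next
  case (Suc T)
  show ?case
  proof (cases "N \<le> c")
    case True
    then have "\<And>xs. recs c xs \<inter> {..N} = {}" using recs_gt by fastforce
    then show ?thesis using GA_ge1[of N c] by simp
  next
    case False
    then have cN: "c < N" by simp
    define b where "b = (\<lambda>x. if x \<le> c then GA N c else if x \<le> N then 2 * GA N x else 1)"
    have "(\<integral>\<^sup>+xs. ennreal (2 ^ card (recs c xs \<inter> {..N})) \<partial>replicate_pmf (Suc T) p)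
       = (\<integral>\<^sup>+x. \<integral>\<^sup>+xs. ennreal (2 ^ card (recs c (x#xs) \<inter> {..N})) \<partial>replicate_pmf T p \<partial>p)"
      by (rule Q_Suc)
    also have "\<dots> \<le> (\<integral>\<^sup>+x. ennreal (b x) \<partial>p)"
    proof (rule nn_integral_mono)
      fix x
      show "(\<integral>\<^sup>+xs. ennreal (2 ^ card (recs c (x#xs) \<inter> {..N})) \<partial>replicate_pmf T p) \<le> ennreal (b x)"
      proof (cases "x \<le> c")
        case True
        then show ?thesis using Suc.IH[of c] by (simp add: b_def)
      next
        case False
        show ?thesis
        proof (cases "x \<le> N")
          case True
          have "\<And>xs. card (insert x (recs x xs) \<inter> {..N}) = Suc (card (recs x xs \<inter> {..N}))"
          proof -
            fix xs
            have "insert x (recs x xs) \<inter> {..N} = insert x (recs x xs \<inter> {..N})" using True by auto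
            moreover have "x \<notin> recs x xs \<inter> {..N}" using recs_gt by blast
            ultimately show "card (insert x (recs x xs) \<inter> {..N}) = Suc (card (recs x xs \<inter> {..N}))"
              by simp
          qed
          then have "(\<integral>\<^sup>+xs. ennreal (2 ^ card (recs c (x#xs) \<inter> {..N})) \<partial>replicate_pmf T p)
               = (\<integral>\<^sup>+xs. 2 * ennreal (2 ^ card (recs x xs \<inter> {..N})) \<partial>replicate_pmf T p)"
            using False by (simp add: ennreal_mult)
          also have "\<dots> = 2 * (\<integral>\<^sup>+xs. ennreal (2 ^ card (recs x xs \<inter> {..N})) \<partial>replicate_pmf T p)"
            by (rule nn_integral_cmult) simp
          also have "\<dots> \<le> 2 * ennreal (GA N x)"
            using Suc.IH[of x] by (rule mult_left_mono) simp
          also have "\<dots> = ennreal (b x)"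
            using False True GA_ge1[of N x] by (simp add: b_def ennreal_mult)
          finally show ?thesis .
        next
          case False2: False
          have "\<And>xs. insert x (recs x xs) \<inter> {..N} = {}" using recs_gt False2 by fastforce
          then show ?thesis using False False2 by (simp add: b_def)
        qed
      qed
    qed
    also have "(\<integral>\<^sup>+x. ennreal (b x) \<partial>p) = ennreal (measure_pmf.expectation p b)"
    proof (rule nn_integral_eq_integral)
      have "norm (b x) \<le> 2 * (real N + 2)" for x
      proof -
        have "GA N c \<le> real N + 2" "GA N x \<le> real N + 2" "GA N c \<ge> 1" "GA N x \<ge> 1"
          using GA_ge1 GA_le by blast+
        then show ?thesis unfolding b_def by (auto simp: abs_if)
      qed
      then show "integrable p b"
        by (intro measure_pmf.integrable_const_bound[where B="2 * (real N + 2)"]) auto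
      show "AE x in p. 0 \<le> b x"
        using GA_ge1 by (auto simp: b_def intro!: AE_I2 order.trans[OF zero_le_one])
    qed
    also have "measure_pmf.expectation p b = GA N c"
      unfolding b_def using integral_bA[OF pmfp cN] .
    finally show ?thesis .
  qed
qed

fun ties :: "nat \<Rightarrow> nat \<Rightarrow> nat \<Rightarrow> nat list \<Rightarrow> nat" where
  "ties L U c [] = 0"
| "ties L U c (x#xs) = (if c < x then ties L U x xs else (if x = c \<and> L \<le> c \<and> c \<le> U then 1 else 0) + ties L U c xs)"

lemma ties_zero: "U < c \<Longrightarrow> ties L U c xs = 0"
  by (induction L U c xs rule: ties.induct) auto

lemma ties_low: "c < L \<Longrightarrow> c' < L \<Longrightarrow> ties L U c xs = ties L U c' xs"
proof (induction xs arbitrary: c c')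
  case Nil then show ?case by simp
next
  case (Cons x xs)
  show ?case
  proof (cases "L \<le> x")
    case True then show ?thesis using Cons.prems by simp
  next
    case False
    then have "ties L U (if c < x then x else c) xs = ties L U (if c' < x then x else c') xs"
      using Cons by (intro Cons.IH) auto
    then show ?thesis using Cons.prems False by (auto split: if_splits)
  qed
qed

definition GB :: "nat \<Rightarrow> nat \<Rightarrow> real" where
  "GB U c = (if c \<le> U then 2 / real c else 0)"

lemma GB_nonneg: "GB U c \<ge> 0" by (simp add: GB_def)

lemma integral_bB:
  assumes pmfp: "\<And>m. pmf p m = pp m" and c1: "1 \<le> c" and cU: "c \<le> U"
  shows "measure_pmf.expectation p (\<lambda>x. if x \<le> c then 2 / real c + (if x = c then 1 else 0) else GB U x) \<le> 2 / real c"
proof -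
  define b where "b = (\<lambda>x. if x \<le> c then 2 / real c + (if x = c then 1 else 0) else GB U x)"
  have e1: "measure_pmf.expectation p b = (\<Sum>x\<in>{..c}. b x * pmf p x) + (\<Sum>x\<in>{c<..U}. b x * pmf p x)"
  proof -
    have "measure_pmf.expectation p b = (\<Sum>x\<in>{..U}. b x * pmf p x)"
      using cU by (intro integral_measure_pmf_real) (auto simp: b_def GB_def split: if_splits)
    moreover have "{..U} = {..c} \<union> {c<..U}" using cU by auto
    ultimately show ?thesis by (simp add: sum.union_disjoint ivl_disj_int)
  qed
  have e2: "(\<Sum>x\<in>{..c}. b x * pmf p x) = 2 / real c * (real c / (real c + 1)) + pp c"
  proof -
    have "(\<Sum>x\<in>{..c}. b x * pmf p x) = (\<Sum>x\<in>{..c}. 2 / real c * pp x + (if x = c then pp c else 0))"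
      by (rule sum.cong) (auto simp: b_def pmfp algebra_simps)
    also have "\<dots> = 2 / real c * (real c / (real c + 1)) + pp c"
      unfolding sum.distrib sum_distrib_left[symmetric] sum_pp by simp
    finally show ?thesis .
  qed
  have e3: "(\<Sum>x\<in>{c<..U}. b x * pmf p x) = 2 * (\<Sum>x\<in>{c<..U}. 1/(real x^2*(real x+1)))"
    unfolding sum_distrib_left
  proof (rule sum.cong)
    fix x assume x: "x \<in> {c<..U}"
    then have "x \<noteq> 0" using c1 by auto
    then show "b x * pmf p x = 2 * (1/(real x^2*(real x+1)))"
      using x by (simp add: b_def GB_def pmfp pp_def power2_eq_square)
  qed simp
  have e4: "(\<Sum>x\<in>{c<..U}. 1/(real x^2*(real x+1))) \<le> 1/(2*real c*(real c+1))"
  proof -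
    have "0 \<le> 1/(2*real U*(real U+1))" by simp
    then show ?thesis using sum_4[OF c1 cU] by linarith
  qed
  have "measure_pmf.expectation p b \<le> 2 / real c * (real c / (real c + 1)) + pp c + 2 * (1/(2*real c*(real c+1)))"
    using e1 e2 e3 e4 by linarith
  also have "\<dots> = 2 / real c"
    using c1 by (simp add: pp_def divide_simps)
  finally show ?thesis unfolding b_def .
qed


lemma tiesB:
  assumes pmfp: "\<And>m. pmf p m = pp m"
  shows "1 \<le> c \<Longrightarrow> (\<integral>\<^sup>+xs. ennreal (ties L U c xs) \<partial>replicate_pmf T p) \<le> ennreal (GB U c)"
proof (induction T arbitrary: c)
  case 0
  then show ?case by (simp add: GB_nonneg)
next
  case (Suc T)
  show ?case
  proof (cases "c \<le> U")
    case False
    then show ?thesis using ties_zero[of U c] by (simp add: GB_nonneg)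
  next
    case True
    note cU = True
    define b where "b = (\<lambda>x. if x \<le> c then 2 / real c + (if x = c then 1 else 0) else GB U x)"
    have "(\<integral>\<^sup>+xs. ennreal (ties L U c xs) \<partial>replicate_pmf (Suc T) p)
       = (\<integral>\<^sup>+x. \<integral>\<^sup>+xs. ennreal (ties L U c (x#xs)) \<partial>replicate_pmf T p \<partial>p)"
      by (rule Q_Suc)
    also have "\<dots> \<le> (\<integral>\<^sup>+x. ennreal (b x) \<partial>p)"
    proof (rule nn_integral_mono)
      fix x
      show "(\<integral>\<^sup>+xs. ennreal (ties L U c (x#xs)) \<partial>replicate_pmf T p) \<le> ennreal (b x)"
      proof (cases "x \<le> c")
        case True
        define a :: real where "a = (if x = c \<and> L \<le> c \<and> c \<le> U then 1 else 0)"
        have "(\<integral>\<^sup>+xs. ennreal (ties L U c (x#xs)) \<partial>replicate_pmf T p)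
             = (\<integral>\<^sup>+xs. ennreal a + ennreal (ties L U c xs) \<partial>replicate_pmf T p)"
          using True by (intro nn_integral_cong) (simp add: a_def ennreal_plus[symmetric] del: ennreal_plus)
        also have "\<dots> = ennreal a + (\<integral>\<^sup>+xs. ennreal (ties L U c xs) \<partial>replicate_pmf T p)"
          by (subst nn_integral_add) auto
        also have "\<dots> \<le> ennreal a + ennreal (GB U c)"
          using Suc.IH[OF Suc.prems] by (rule add_left_mono)
        also have "\<dots> = ennreal (a + GB U c)"
          by (simp add: a_def GB_nonneg ennreal_plus)
        also have "\<dots> \<le> ennreal (b x)"
          using True cU by (intro ennreal_leI) (auto simp: a_def b_def GB_def)
        finally show ?thesis .
      next
        case False
        then show ?thesis using Suc.IH[of x] Suc.prems by (simp add: b_def)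
      qed
    qed
    also have "(\<integral>\<^sup>+x. ennreal (b x) \<partial>p) = ennreal (measure_pmf.expectation p b)"
    proof (rule nn_integral_eq_integral)
      have "norm (b x) \<le> 3" for x
      proof -
        have "2 / real c \<le> 2" "0 \<le> 2 / real c" using Suc.prems by (simp_all add: divide_simps)
        moreover have "GB U x \<le> 2" by (simp add: GB_def divide_simps)
        ultimately have "0 \<le> b x \<and> b x \<le> 3" using GB_nonneg[of U x] unfolding b_def
          by (smt (verit))
        then show ?thesis by simp
      qed
      then show "integrable p b"
        by (intro measure_pmf.integrable_const_bound[where B=3]) auto
      show "AE x in p. 0 \<le> b x"
        by (auto simp: b_def GB_nonneg intro!: AE_I2)
    qed
    also have "\<dots> \<le> ennreal (2 / real c)"
      unfolding b_def using integral_bB[OF pmfp Suc.prems cU] by (rule ennreal_leI)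
    also have "\<dots> = ennreal (GB U c)" using cU by (simp add: GB_def)
    finally show ?thesis .
  qed
qed

lemma emeasure_Q_single:
  "emeasure (measure_pmf (replicate_pmf (length xs) p)) {xs} = ennreal (\<Prod>i<length xs. pmf p (xs!i))"
proof (induction xs)
  case Nil then show ?case by simp
next
  case (Cons y ys)
  have "emeasure (measure_pmf (replicate_pmf (length (y#ys)) p)) {y#ys}
     = (\<integral>\<^sup>+zs. indicator {y#ys} zs \<partial>replicate_pmf (Suc (length ys)) p)"
    by simp
  also have "\<dots> = (\<integral>\<^sup>+x. \<integral>\<^sup>+zs. indicator {y#ys} (x#zs) \<partial>replicate_pmf (length ys) p \<partial>p)"
    by (rule Q_Suc)
  also have "\<dots> = (\<integral>\<^sup>+x. indicator {y} x * emeasure (measure_pmf (replicate_pmf (length ys) p)) {ys} \<partial>p)"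
  proof (rule nn_integral_cong)
    fix x
    have "(\<lambda>zs. indicator {y#ys} (x#zs) :: ennreal) = (\<lambda>zs. indicator {y} x * indicator {ys} zs)"
      by (auto simp: indicator_def)
    then show "(\<integral>\<^sup>+zs. indicator {y#ys} (x#zs) \<partial>replicate_pmf (length ys) p) = indicator {y} x * emeasure (measure_pmf (replicate_pmf (length ys) p)) {ys}"
      by (simp add: nn_integral_cmult)
  qed
  also have "\<dots> = emeasure (measure_pmf p) {y} * emeasure (measure_pmf (replicate_pmf (length ys) p)) {ys}"
    by (subst nn_integral_multc) auto
  also have "\<dots> = ennreal (pmf p y * (\<Prod>i<length ys. pmf p (ys!i)))"
    using Cons by (simp add: emeasure_pmf_single ennreal_mult prod_nonneg)
  also have "pmf p y * (\<Prod>i<length ys. pmf p (ys!i)) = (\<Prod>i<length (y#ys). pmf p ((y#ys)!i))"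
    by (simp only: length_Cons prod.lessThan_Suc_shift nth_Cons_0 nth_Cons_Suc)
  finally show ?case .
qed

lemma emeasure_Q_bounded:
  "emeasure (measure_pmf (replicate_pmf T p)) {xs. \<forall>x\<in>set xs. x \<le> L} = emeasure (measure_pmf p) {..L} ^ T"
proof (induction T)
  case 0 then show ?case by (simp add: emeasure_pmf_single)
next
  case (Suc T)
  have "emeasure (measure_pmf (replicate_pmf (Suc T) p)) {xs. \<forall>x\<in>set xs. x \<le> L}
     = (\<integral>\<^sup>+zs. indicator {xs. \<forall>x\<in>set xs. x \<le> L} zs \<partial>replicate_pmf (Suc T) p)"
    by simp
  also have "\<dots> = (\<integral>\<^sup>+x. \<integral>\<^sup>+zs. indicator {xs. \<forall>x\<in>set xs. x \<le> L} (x#zs) \<partial>replicate_pmf T p \<partial>p)"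
    by (rule Q_Suc)
  also have "\<dots> = (\<integral>\<^sup>+x. indicator {..L} x * emeasure (measure_pmf (replicate_pmf T p)) {xs. \<forall>x\<in>set xs. x \<le> L} \<partial>p)"
  proof (rule nn_integral_cong)
    fix x
    have "(\<lambda>zs. indicator {xs. \<forall>x\<in>set xs. x \<le> L} (x#zs) :: ennreal) = (\<lambda>zs. indicator {..L} x * indicator {xs. \<forall>x\<in>set xs. x \<le> L} zs)"
      by (auto simp: indicator_def)
    then show "(\<integral>\<^sup>+zs. indicator {xs. \<forall>x\<in>set xs. x \<le> L} (x#zs) \<partial>replicate_pmf T p) = indicator {..L} x * emeasure (measure_pmf (replicate_pmf T p)) {xs. \<forall>x\<in>set xs. x \<le> L}"
      by (simp add: nn_integral_cmult)
  qed
  also have "\<dots> = emeasure (measure_pmf p) {..L} * emeasure (measure_pmf (replicate_pmf T p)) {xs. \<forall>x\<in>set xs. x \<le> L}"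
    by (subst nn_integral_multc) auto
  finally show ?case using Suc by (simp add: mult.commute)
qed

lemma markovA:
  assumes pmfp: "\<And>m. pmf p m = pp m"
  shows "measure_pmf.prob (replicate_pmf T p) {xs. t \<le> card (recs 0 xs \<inter> {..N})} \<le> GA N 0 / 2 ^ t"
proof -
  define S where "S = {xs. t \<le> card (recs 0 xs \<inter> {..N})}"
  have "ennreal (2 ^ t) * emeasure (measure_pmf (replicate_pmf T p)) S
      = (\<integral>\<^sup>+xs. ennreal (2 ^ t) * indicator S xs \<partial>replicate_pmf T p)"
    by (simp add: nn_integral_cmult_indicator)
  also have "\<dots> \<le> (\<integral>\<^sup>+xs. ennreal (2 ^ card (recs 0 xs \<inter> {..N})) \<partial>replicate_pmf T p)"
    by (intro nn_integral_mono) (auto simp: S_def indicator_def intro!: ennreal_leI)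
  also have "\<dots> \<le> ennreal (GA N 0)" by (rule recA[OF pmfp])
  finally have "ennreal (2 ^ t * measure_pmf.prob (replicate_pmf T p) S) \<le> ennreal (GA N 0)"
    by (simp add: measure_pmf.emeasure_eq_measure ennreal_mult)
  then have "2 ^ t * measure_pmf.prob (replicate_pmf T p) S \<le> GA N 0"
    using GA_ge1[of N 0] by (subst (asm) ennreal_le_iff) auto
  then show ?thesis unfolding S_def by (simp add: field_simps)
qed

lemma markovB:
  assumes pmfp: "\<And>m. pmf p m = pp m" and c: "1 \<le> c"
  shows "measure_pmf.prob (replicate_pmf T p) {xs. 1 \<le> ties L U c xs} \<le> 2 / real c"
proof -
  define S where "S = {xs. 1 \<le> ties L U c xs}"
  have "emeasure (measure_pmf (replicate_pmf T p)) S
      = (\<integral>\<^sup>+xs. indicator S xs \<partial>replicate_pmf T p)"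
    by simp
  also have "\<dots> \<le> (\<integral>\<^sup>+xs. ennreal (ties L U c xs) \<partial>replicate_pmf T p)"
    by (intro nn_integral_mono) (auto simp: S_def indicator_def intro!: ennreal_leI)
  also have "\<dots> \<le> ennreal (GB U c)" by (rule tiesB[OF pmfp c])
  also have "\<dots> \<le> ennreal (2 / real c)" by (intro ennreal_leI) (simp add: GB_def)
  finally have "ennreal (measure_pmf.prob (replicate_pmf T p) S) \<le> ennreal (2 / real c)"
    by (simp add: measure_pmf.emeasure_eq_measure)
  then show ?thesis unfolding S_def by (subst (asm) ennreal_le_iff) auto
qed

locale setting = prob_space M for M :: "'a measure" +
  fixes k :: "nat \<Rightarrow> 'a \<Rightarrow> nat"
  assumes indep: "indep_vars (\<lambda>_. count_space UNIV) k {1..}"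
    and vals: "\<And>n \<omega>. n \<ge> 1 \<Longrightarrow> \<omega> \<in> space M \<Longrightarrow> k n \<omega> \<ge> 1"
    and distr: "\<And>n m. n \<ge> 1 \<Longrightarrow> m \<ge> 1 \<Longrightarrow>
        measure M {\<omega> \<in> space M. k n \<omega> = m} = 1 / (real m * (real m + 1))"
begin

lemma meas_k[measurable]: "k (Suc i) \<in> measurable M (count_space UNIV)"
  using indep unfolding indep_vars_def2 by auto

lemma prob_k: "prob {\<omega>\<in>space M. k (Suc i) \<omega> = m} = pp m"
proof (cases "m = 0")
  case True
  have "{\<omega>\<in>space M. k (Suc i) \<omega> = m} = {}" using vals[of "Suc i"] True by force
  then show ?thesis using True by (simp only: pp_def) simp
next
  case False
  then show ?thesis using distr[of "Suc i" m] by (simp add: pp_def)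
qed

lemma pp_total: "(\<integral>\<^sup>+x. ennreal (pp x) \<partial>count_space UNIV) = 1"
proof -
  define D where "D = distr M (count_space UNIV) (k (Suc 0))"
  have "emeasure D UNIV = (\<integral>\<^sup>+x. emeasure D {x} \<partial>count_space UNIV)"
    by (rule emeasure_countable_singleton) (auto simp: D_def)
  moreover have "emeasure D UNIV = 1"
    unfolding D_def by (subst emeasure_distr) (auto simp: emeasure_space_1)
  moreover have "emeasure D {x} = ennreal (pp x)" for x
  proof -
    have "emeasure D {x} = emeasure M {\<omega>\<in>space M. k (Suc 0) \<omega> = x}"
      unfolding D_def by (subst emeasure_distr) (auto intro!: arg_cong[where f="emeasure M"])
    also have "\<dots> = ennreal (pp x)"
      using prob_k[of 0 x] by (simp add: emeasure_eq_measure)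
    finally show ?thesis .
  qed
  ultimately show ?thesis by simp
qed

definition p :: "nat pmf" where "p = embed_pmf pp"

lemma pmf_p: "pmf p m = pp m"
  unfolding p_def by (rule pmf_embed_pmf) (auto simp: pp_def pp_total[unfolded pp_def])

definition pre :: "nat \<Rightarrow> 'a \<Rightarrow> nat list" where
  "pre T \<omega> = map (\<lambda>i. k (Suc i) \<omega>) [0..<T]"

lemma pre_eq: "pre T \<omega> = xs \<longleftrightarrow> length xs = T \<and> (\<forall>i<T. k (Suc i) \<omega> = xs!i)"
  unfolding pre_def by (auto simp: list_eq_iff_nth_eq)

lemma pre_sets: "{\<omega>\<in>space M. pre T \<omega> = xs} \<in> sets M"
proof (cases "length xs = T")
  case True
  have "{\<omega>\<in>space M. pre T \<omega> = xs} = {\<omega>\<in>space M. \<forall>i<T. k (Suc i) \<omega> = xs!i}"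
    using True by (auto simp: pre_eq)
  also have "\<dots> \<in> sets M" by measurable
  finally show ?thesis .
next
  case False
  then show ?thesis by (simp add: pre_eq)
qed

lemma pre_meas: "pre T \<in> measurable M (count_space UNIV)"
proof -
  have "\<And>xs. pre T -` {xs} \<inter> space M = {\<omega>\<in>space M. pre T \<omega> = xs}" by auto
  then show ?thesis using pre_sets by (subst measurable_count_space_eq_countable) auto
qed

lemma prob_pre: "length xs = T \<Longrightarrow> prob {\<omega>\<in>space M. pre T \<omega> = xs} = (\<Prod>i<T. pp (xs!i))"
proof (cases "T = 0")
  case True
  assume "length xs = T"
  then show ?thesis using True by (simp add: pre_eq prob_space)
next
  case False
  assume len: "length xs = T"
  define A where "A = (\<lambda>j. k j -` {xs!(j-1)} \<inter> space M)"
  have F: "indep_sets (\<lambda>i. {k i -` B \<inter> space M | B. B \<in> sets (count_space UNIV)}) {1..}"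
    using indep unfolding indep_vars_def2 by auto
  have "prob (\<Inter>j\<in>Suc ` {..<T}. A j) = (\<Prod>j\<in>Suc ` {..<T}. prob (A j))"
    by (rule indep_setsD[OF F]) (use False in \<open>auto simp: A_def\<close>)
  also have "\<dots> = (\<Prod>i<T. prob (A (Suc i)))"
    by (subst prod.reindex) auto
  also have "\<dots> = (\<Prod>i<T. pp (xs!i))"
  proof (rule prod.cong)
    fix i
    have "A (Suc i) = {\<omega>\<in>space M. k (Suc i) \<omega> = xs!i}" by (auto simp: A_def)
    then show "prob (A (Suc i)) = pp (xs!i)" using prob_k by simp
  qed simp
  finally have e: "prob (\<Inter>j\<in>Suc ` {..<T}. A j) = (\<Prod>i<T. pp (xs!i))" .
  have "(\<Inter>j\<in>Suc ` {..<T}. A j) = {\<omega>\<in>space M. pre T \<omega> = xs}"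
    using False len by (auto simp: A_def pre_eq)
  then show ?thesis using e by simp
qed

lemma distr_pre: "distr M (count_space UNIV) (pre T) = measure_pmf (replicate_pmf T p)"
proof (rule measure_eqI_countable[where A=UNIV])
  fix xs :: "nat list"
  have e: "emeasure (distr M (count_space UNIV) (pre T)) {xs} = emeasure M {\<omega>\<in>space M. pre T \<omega> = xs}"
    by (subst emeasure_distr) (auto simp: pre_meas intro!: arg_cong[where f="emeasure M"])
  show "emeasure (distr M (count_space UNIV) (pre T)) {xs} = emeasure (measure_pmf (replicate_pmf T p)) {xs}"
  proof (cases "length xs = T")
    case True
    then show ?thesis
      unfolding e using emeasure_Q_single[of xs p] prob_pre[OF True]
      by (simp add: emeasure_eq_measure pmf_p)
  next
    case False
    then have "xs \<notin> set_pmf (replicate_pmf T p)" by (simp add: set_replicate_pmf)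
    then have "emeasure (measure_pmf (replicate_pmf T p)) {xs} = 0"
      by (simp add: emeasure_pmf_single set_pmf_iff)
    then show ?thesis unfolding e using False by (simp add: pre_eq)
  qed
qed auto

lemma prob_pre_set: "prob {\<omega>\<in>space M. pre T \<omega> \<in> S} = measure_pmf.prob (replicate_pmf T p) S"
proof -
  have "measure (distr M (count_space UNIV) (pre T)) S = measure M (pre T -` S \<inter> space M)"
    by (rule measure_distr) (auto simp: pre_meas)
  moreover have "pre T -` S \<inter> space M = {\<omega>\<in>space M. pre T \<omega> \<in> S}" by auto
  ultimately show ?thesis by (simp add: distr_pre)
qed

lemma pre_set_sets: "{\<omega>\<in>space M. P (pre T \<omega>)} \<in> sets M"
proof -
  have "{\<omega>\<in>space M. P (pre T \<omega>)} = pre T -` {xs. P xs} \<inter> space M" by auto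
  then show ?thesis using measurable_sets[OF pre_meas, of "{xs. P xs}"] by simp
qed

end

lemma recs_append: "recs c (xs @ ys) = recs c xs \<union> recs (foldl max c xs) ys"
  by (induction xs arbitrary: c) (auto simp: max_def)

lemma ties_append: "ties L U c (xs @ ys) = ties L U c xs + ties L U (foldl max c xs) ys"
  by (induction xs arbitrary: c) (auto simp: max_def)

lemma ties_monoU: "U \<le> U' \<Longrightarrow> ties L U c xs \<le> ties L U' c xs"
  apply (induction xs arbitrary: c)
   apply simp
  apply (simp; fastforce intro: le_SucI add_mono)
  done

lemma fm_ge0: "(c::nat) \<le> foldl max c xs"
  by (induction xs arbitrary: c) (auto intro: order.trans[OF max.cobounded1])

lemma fm_ge: "(y::nat) \<in> insert c (set xs) \<Longrightarrow> y \<le> foldl max c xs"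
proof (induction xs arbitrary: c)
  case Nil then show ?case by simp
next
  case (Cons x xs)
  have m: "max c x \<le> foldl max (max c x) xs" by (rule fm_ge0)
  show ?case
  proof (cases "y \<in> set xs")
    case True then show ?thesis using Cons.IH[of "max c x"] by simp
  next
    case False
    then have "y = c \<or> y = x" using Cons.prems by auto
    then show ?thesis using m by auto
  qed
qed

lemma fm_le: "(c::nat) \<le> B \<Longrightarrow> \<forall>y\<in>set xs. y \<le> B \<Longrightarrow> foldl max c xs \<le> B"
  by (induction xs arbitrary: c) auto

definition preL :: "(nat \<Rightarrow> nat) \<Rightarrow> nat \<Rightarrow> nat list" where
  "preL f T = map (\<lambda>i. f (Suc i)) [0..<T]"

lemma preL_Suc: "preL f (Suc T) = preL f T @ [f (Suc T)]"
  by (simp add: preL_def)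

lemma preL_mono: "n \<le> T \<Longrightarrow> \<exists>ys. preL f T = preL f n @ ys"
proof (induction T)
  case 0 then show ?case by simp
next
  case (Suc T)
  show ?case
  proof (cases "n = Suc T")
    case True then show ?thesis by simp
  next
    case False
    then obtain ys where "preL f T = preL f n @ ys" using Suc by auto
    then show ?thesis by (simp add: preL_Suc)
  qed
qed

lemma set_preL: "set (preL f T) = f ` {1..T}"
proof -
  have "set (preL f T) = (\<lambda>i. f (Suc i)) ` {0..<T}" by (simp add: preL_def)
  also have "\<dots> = f ` (Suc ` {0..<T})" by (simp only: image_image)
  also have "Suc ` {0..<T} = {1..T}" by (auto simp: image_iff)
  finally show ?thesis .
qed

lemma fm_preL:
  assumes "\<And>i. 1 \<le> i \<Longrightarrow> i \<le> T \<Longrightarrow> f i \<le> B" "1 \<le> a" "a \<le> T" "f a = B"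
  shows "foldl max 0 (preL f T) = B"
proof (rule antisym)
  show "foldl max 0 (preL f T) \<le> B" using assms(1) by (intro fm_le) (auto simp: set_preL)
  show "B \<le> foldl max 0 (preL f T)" using assms(2-4) by (intro fm_ge) (auto simp: set_preL)
qed

lemma recs_mono_T: "n \<le> T \<Longrightarrow> recs c (preL f n) \<subseteq> recs c (preL f T)"
  using preL_mono[of n T f] by (auto simp: recs_append)

context
  fixes f :: "nat \<Rightarrow> nat"
  assumes unb: "\<And>L. \<exists>n. L < f (Suc n)" and pos: "\<And>i. 1 \<le> i \<Longrightarrow> 1 \<le> f i"
begin

lemma exists_bigger: "\<exists>n. m < n \<and> f m < f n"
proof -
  obtain n where n: "Max (f ` {..m}) < f (Suc n)" using unb by blast
  have "Suc n \<notin> {..m}"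
  proof
    assume "Suc n \<in> {..m}"
    then have "f (Suc n) \<le> Max (f ` {..m})" by (intro Max_ge) auto
    then show False using n by simp
  qed
  moreover have "f m \<le> Max (f ` {..m})" by (intro Max_ge) auto
  ultimately show ?thesis using n by (intro exI[of _ "Suc n"]) auto
qed

lemma rt_step:
  assumes "1 \<le> j"
  shows "record_time f j < record_time f (Suc j) \<and> f (record_time f j) < f (record_time f (Suc j))
    \<and> (\<forall>n. record_time f j < n \<and> n < record_time f (Suc j) \<longrightarrow> f n \<le> f (record_time f j))"
proof -
  obtain j' where j: "j = Suc j'" using assms by (cases j) auto
  define r where "r = record_time f j"
  have rs: "record_time f (Suc j) = (LEAST n. r < n \<and> f r < f n)"
    unfolding r_def j by simp
  have ex: "\<exists>n. r < n \<and> f r < f n" by (rule exists_bigger)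
  have P: "r < record_time f (Suc j) \<and> f r < f (record_time f (Suc j))"
    unfolding rs by (rule LeastI_ex[OF ex])
  have Q: "\<forall>n. r < n \<and> n < record_time f (Suc j) \<longrightarrow> f n \<le> f r"
    unfolding rs using not_less_Least by fastforce
  show ?thesis using P Q unfolding r_def by blast
qed

lemma rt_ge1: "1 \<le> j \<Longrightarrow> 1 \<le> record_time f j"
proof (induction j)
  case 0 then show ?case by simp
next
  case (Suc j)
  show ?case
  proof (cases "j = 0")
    case True then show ?thesis by simp
  next
    case False
    then show ?thesis using Suc rt_step[of j] by simp
  qed
qed

lemma rt_record: "1 \<le> j \<Longrightarrow> 1 \<le> i \<Longrightarrow> i < record_time f j \<Longrightarrow> f i < f (record_time f j)"
proof (induction j arbitrary: i)
  case 0 then show ?case by simp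
next
  case (Suc j)
  show ?case
  proof (cases "j = 0")
    case True then show ?thesis using Suc by simp
  next
    case False
    then have j1: "1 \<le> j" by simp
    note st = rt_step[OF j1]
    consider "i < record_time f j" | "i = record_time f j" | "record_time f j < i" by linarith
    then show ?thesis
    proof cases
      case 1 then show ?thesis using Suc.IH[OF j1 Suc.prems(2)] st by (meson order.strict_trans)
    next
      case 2 then show ?thesis using st by simp
    next
      case 3 then show ?thesis using st Suc.prems by (meson le_less_trans)
    qed
  qed
qed

lemma v_mono: "1 \<le> a \<Longrightarrow> a < b \<Longrightarrow> f (record_time f a) < f (record_time f b)"
proof (induction b)
  case 0 then show ?case by simp
next
  case (Suc b)
  show ?case
  proof (cases "a = b")
    case True then show ?thesis using rt_step[of a] Suc by simp
  next
    case False
    then have "a < b" using Suc by simp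
    then show ?thesis using Suc rt_step[of b] by (meson less_trans order.trans less_imp_le)
  qed
qed

lemma v_ge: "1 \<le> j \<Longrightarrow> j \<le> f (record_time f j)"
proof (induction j)
  case 0 then show ?case by simp
next
  case (Suc j)
  show ?case
  proof (cases "j = 0")
    case True then show ?thesis using pos[of 1] by simp
  next
    case False
    then show ?thesis using Suc v_mono[of j "Suc j"] by simp
  qed
qed

lemma v_in_recs: "1 \<le> j \<Longrightarrow> f (record_time f j) \<in> recs 0 (preL f (record_time f j))"
proof -
  assume j: "1 \<le> j"
  define r where "r = record_time f j"
  have r1: "1 \<le> r" using rt_ge1[OF j] by (simp add: r_def)
  then obtain r' where r': "r = Suc r'" by (cases r) auto
  have "\<forall>y\<in>set (preL f r'). y \<le> f r - 1"
  proof
    fix y assume "y \<in> set (preL f r')"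
    then obtain i where i: "1 \<le> i" "i \<le> r'" "y = f i" by (auto simp: set_preL)
    then have "f i < f r" using rt_record[OF j i(1)] r' unfolding r_def by simp
    then show "y \<le> f r - 1" using i by simp
  qed
  then have "foldl max 0 (preL f r') \<le> f r - 1" by (intro fm_le) auto
  moreover have "0 < f r"
    using pos[OF r1] by simp
  ultimately have "foldl max 0 (preL f r') < f r" by linarith
  then show ?thesis unfolding r_def[symmetric] r' preL_Suc recs_append by simp
qed

lemma card_recs:
  assumes "1 \<le> j" "f (record_time f j) \<le> N"
  shows "j \<le> card (recs 0 (preL f (record_time f j)) \<inter> {..N})"
proof -
  define v where "v = (\<lambda>l. f (record_time f l))"
  have inj: "inj_on v {1..j}"
    by (rule inj_onI) (metis atLeastAtMost_iff linorder_neqE_nat v_def v_mono less_irrefl)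
  have sub: "v ` {1..j} \<subseteq> recs 0 (preL f (record_time f j)) \<inter> {..N}"
  proof
    fix y assume "y \<in> v ` {1..j}"
    then obtain l where l: "1 \<le> l" "l \<le> j" "y = v l" by auto
    have "v l \<le> v j" using v_mono[of l j] l by (cases "l = j") (auto simp: v_def)
    moreover have "record_time f l \<le> record_time f j"
    proof (cases "l = j")
      case False
      then have "l < j" using l by simp
      then show ?thesis
      proof (induction j)
        case 0 then show ?case by simp
      next
        case (Suc j)
        then show ?case using rt_step[of j] l(1) by (cases "l = j") (auto intro: less_imp_le)
      qed
    qed simp
    moreover have "v l \<in> recs 0 (preL f (record_time f l))" using v_in_recs[of l] l by (simp add: v_def)
    ultimately show "y \<in> recs 0 (preL f (record_time f j)) \<inter> {..N}"
      using l recs_mono_T[of "record_time f l" "record_time f j" 0 f] assms(2) by (auto simp: v_def)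
  qed
  have "card (v ` {1..j}) = j" using inj by (simp add: card_image)
  then show ?thesis using card_mono[OF _ sub] by simp
qed

lemma tie_found:
  assumes j: "1 \<le> j" and n: "record_time f j < n" "n < record_time f (Suc j)"
    and eq: "f n = f (record_time f j)" and LU: "L \<le> f n" "f n \<le> U"
  shows "1 \<le> ties L U 0 (preL f n)"
proof -
  obtain n' where n': "n = Suc n'" using n by (cases n) auto
  have "foldl max 0 (preL f n') = f n"
  proof (rule fm_preL)
    fix i assume i: "1 \<le> i" "i \<le> n'"
    show "f i \<le> f n"
    proof (cases "i < record_time f j")
      case True then show ?thesis using rt_record[OF j i(1)] eq by simp
    next
      case False
      then show ?thesis using rt_step[OF j] eq n n' i by (cases "i = record_time f j") auto
    qed
  next
    show "1 \<le> record_time f j" by (rule rt_ge1[OF j])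
    show "record_time f j \<le> n'" using n n' by simp
    show "f (record_time f j) = f n" using eq by simp
  qed
  then show ?thesis unfolding n' preL_Suc ties_append using LU n' by simp
qed

end


lemma final_det:
  fixes f :: "nat \<Rightarrow> nat"
  assumes unb: "\<And>L. \<exists>n. L < f (Suc n)" and pos: "\<And>i. 1 \<le> i \<Longrightarrow> 1 \<le> f i"
    and recB: "eventually (\<lambda>i. \<not> (\<exists>T. 3*i-3 \<le> card (recs 0 (preL f T) \<inter> {..2^i}))) sequentially"
    and L2: "2 \<le> L" and tieY: "\<not> (\<exists>T. 1 \<le> ties L T (L-1) (preL f T))"
  shows "eventually (\<lambda>j. (\<forall>n. record_time f j < n \<and> n < record_time f (Suc j) \<longrightarrow> f n < f (record_time f j))
          \<and> real (f (record_time f j)) > 2 powr (real j / 3)) sequentially"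
proof -
  obtain I where I: "\<And>i. i \<ge> I \<Longrightarrow> \<not> (\<exists>T. 3*i-3 \<le> card (recs 0 (preL f T) \<inter> {..2^i}))"
    using recB unfolding eventually_sequentially by blast
  show ?thesis unfolding eventually_sequentially
  proof (intro exI[of _ "3*I + L + 1"] allI impI)
    fix j assume jN: "3*I + L + 1 \<le> j"
    then have j1: "1 \<le> j" by simp
    have vj: "j \<le> f (record_time f j)" by (rule v_ge[OF unb pos j1])
    have B: "2 powr (real j / 3) < real (f (record_time f j))"
    proof (rule ccontr)
      assume "\<not> 2 powr (real j / 3) < real (f (record_time f j))"
      then have le: "real (f (record_time f j)) \<le> 2 powr (real j / 3)" by simp
      define i where "i = j div 3 + 1"
      have iI: "i \<ge> I" using jN unfolding i_def by linarith
      have "real j / 3 < real i" unfolding i_def by linarith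
      then have "2 powr (real j / 3) < 2 powr (real i)" by (intro powr_less_mono) auto
      also have "\<dots> = 2 ^ i" by (simp add: powr_realpow)
      finally have "real (f (record_time f j)) < 2 ^ i" using le by linarith
      then have "f (record_time f j) \<le> 2 ^ i"
        by (metis less_imp_le of_nat_le_iff of_nat_less_imp_less of_nat_numeral of_nat_power)
      then have "j \<le> card (recs 0 (preL f (record_time f j)) \<inter> {..2^i})"
        using card_recs[OF unb pos j1] by blast
      moreover have "3*i - 3 \<le> j" unfolding i_def using times_div_less_eq_dividend[of 3 j] by simp
      ultimately show False using I[OF iI] using le_trans by blast
    qed
    have A: "\<forall>n. record_time f j < n \<and> n < record_time f (Suc j) \<longrightarrow> f n < f (record_time f j)"
    proof (intro allI impI)
      fix n assume n: "record_time f j < n \<and> n < record_time f (Suc j)"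
      show "f n < f (record_time f j)"
      proof (rule ccontr)
        assume "\<not> f n < f (record_time f j)"
        moreover have "f n \<le> f (record_time f j)" using rt_step[OF unb pos j1] n by blast
        ultimately have eq: "f n = f (record_time f j)" by simp
        have Lf: "L \<le> f n" using eq vj jN by simp
        have t1: "1 \<le> ties L (f n) 0 (preL f n)"
          by (rule tie_found[OF unb pos j1]) (use n eq Lf in auto)
        have t2: "ties L (f n) 0 (preL f n) = ties L (f n) (L-1) (preL f n)"
          using L2 by (intro ties_low) auto
        define T where "T = max n (f n)"
        obtain ys where ys: "preL f T = preL f n @ ys" using preL_mono[of n T f] by (auto simp: T_def)
        have "ties L (f n) (L-1) (preL f n) \<le> ties L T (L-1) (preL f n)"
          by (rule ties_monoU) (simp add: T_def)
        also have "\<dots> \<le> ties L T (L-1) (preL f T)" unfolding ys ties_append by simp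
        finally have "1 \<le> ties L T (L-1) (preL f T)" using t1 t2 by simp
        then show False using tieY by blast
      qed
    qed
    show "(\<forall>n. record_time f j < n \<and> n < record_time f (Suc j) \<longrightarrow> f n < f (record_time f j))
          \<and> real (f (record_time f j)) > 2 powr (real j / 3)" using A B by simp
  qed
qed

lemma arithB: "(real (2^i) + 2) / 2 / 2^(3*i-3) \<le> 8 * (1/4::real)^i"
proof (cases i)
  case 0 then show ?thesis by simp
next
  case (Suc j)
  have e: "(2::real)^(3*i-3) = 2^j * 4^j"
  proof -
    have "3*i-3 = 3*j" using Suc by simp
    then have "(2::real)^(3*i-3) = (2^3)^j" by (simp add: power_mult)
    also have "\<dots> = (2*4)^j" by simp
    also have "\<dots> = 2^j * 4^j" by (rule power_mult_distrib)
    finally show ?thesis .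
  qed
  have "(real (2^i) + 2) / 2 = 2^j + 1" using Suc by simp
  then have "(real (2^i) + 2) / 2 / 2^(3*i-3) = (2^j + 1) / (2^j * 4^j)" unfolding e by (simp only:)
  also have "\<dots> \<le> (2 * 2^j) / (2^j * 4^j)"
    by (intro divide_right_mono) auto
  also have "\<dots> = 8 * (1/4)^i" using Suc by (simp add: power_divide field_simps)
  finally show ?thesis .
qed

context setting
begin

lemma pre_preL: "pre T \<omega> = preL (\<lambda>i. k i \<omega>) T"
  by (simp add: pre_def preL_def)

lemma AE_unb: "AE \<omega> in M. \<forall>L. \<exists>n. L < k (Suc n) \<omega>"
proof -
  have "AE \<omega> in M. \<exists>n. L < k (Suc n) \<omega>" for L
  proof (rule AE_I[where N="{\<omega>\<in>space M. \<forall>n. k (Suc n) \<omega> \<le> L}"])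
    show "{\<omega> \<in> space M. \<not> (\<exists>n. L < k (Suc n) \<omega>)} \<subseteq> {\<omega>\<in>space M. \<forall>n. k (Suc n) \<omega> \<le> L}"
      by (auto simp: not_less)
    show N: "{\<omega>\<in>space M. \<forall>n. k (Suc n) \<omega> \<le> L} \<in> sets M" by measurable
    define q :: real where "q = real L / (real L + 1)"
    have bnd: "prob {\<omega>\<in>space M. \<forall>n. k (Suc n) \<omega> \<le> L} \<le> q ^ T" for T
    proof -
      have "prob {\<omega>\<in>space M. \<forall>n. k (Suc n) \<omega> \<le> L} \<le> prob {\<omega>\<in>space M. pre T \<omega> \<in> {xs. \<forall>x\<in>set xs. x \<le> L}}"
      proof (rule finite_measure_mono)
        show "{\<omega>\<in>space M. pre T \<omega> \<in> {xs. \<forall>x\<in>set xs. x \<le> L}} \<in> sets M"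
          by (rule pre_set_sets)
        show "{\<omega>\<in>space M. \<forall>n. k (Suc n) \<omega> \<le> L} \<subseteq> {\<omega>\<in>space M. pre T \<omega> \<in> {xs. \<forall>x\<in>set xs. x \<le> L}}"
          by (auto simp: pre_def)
      qed
      also have "\<dots> = measure_pmf.prob (replicate_pmf T p) {xs. \<forall>x\<in>set xs. x \<le> L}"
        by (rule prob_pre_set)
      also have "\<dots> = q ^ T"
      proof -
        have "emeasure (measure_pmf (replicate_pmf T p)) {xs. \<forall>x\<in>set xs. x \<le> L} = ennreal (q ^ T)"
        proof -
          have "emeasure (measure_pmf p) {..L} = ennreal q"
            using prob_pmf_le[OF pmf_p, of L] by (simp add: measure_pmf.emeasure_eq_measure q_def)
          then show ?thesis by (simp add: emeasure_Q_bounded ennreal_power q_def)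
        qed
        then have "ennreal (measure_pmf.prob (replicate_pmf T p) {xs. \<forall>x\<in>set xs. x \<le> L}) = ennreal (q ^ T)"
          by (simp add: measure_pmf.emeasure_eq_measure)
        then show ?thesis by (subst (asm) ennreal_inj) (auto simp: q_def)
      qed
      finally show ?thesis .
    qed
    have "(\<lambda>T. q ^ T) \<longlonglongrightarrow> 0"
      by (rule LIMSEQ_power_zero) (auto simp: q_def)
    then have "prob {\<omega>\<in>space M. \<forall>n. k (Suc n) \<omega> \<le> L} \<le> 0"
      using bnd by (intro LIMSEQ_le_const) auto
    then show "emeasure M {\<omega>\<in>space M. \<forall>n. k (Suc n) \<omega> \<le> L} = 0"
      by (simp add: emeasure_eq_measure measure_nonneg order.antisym)
  qed
  then show ?thesis by (simp add: AE_all_countable)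
qed


definition Bt :: "nat \<Rightarrow> nat \<Rightarrow> 'a set" where
  "Bt i T = {\<omega>\<in>space M. 3*i-3 \<le> card (recs 0 (pre T \<omega>) \<inter> {..2^i})}"

definition Yt :: "nat \<Rightarrow> nat \<Rightarrow> 'a set" where
  "Yt L T = {\<omega>\<in>space M. 1 \<le> ties L T (L-1) (pre T \<omega>)}"

lemma Bt_sets[measurable]: "Bt i T \<in> sets M"
  unfolding Bt_def by (rule pre_set_sets)

lemma Yt_sets[measurable]: "Yt L T \<in> sets M"
  unfolding Yt_def by (rule pre_set_sets)

lemma Bt_inc: "incseq (Bt i)"
proof (rule incseq_SucI)
  fix T
  show "Bt i T \<subseteq> Bt i (Suc T)"
  proof
    fix \<omega> assume w: "\<omega> \<in> Bt i T"
    have "recs 0 (pre T \<omega>) \<inter> {..2^i} \<subseteq> recs 0 (pre (Suc T) \<omega>) \<inter> {..2^i}"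
      unfolding pre_preL using recs_mono_T[of T "Suc T"] by auto
    then have "card (recs 0 (pre T \<omega>) \<inter> {..2^i}) \<le> card (recs 0 (pre (Suc T) \<omega>) \<inter> {..2^i})"
      by (intro card_mono) auto
    then show "\<omega> \<in> Bt i (Suc T)" using w by (auto simp: Bt_def)
  qed
qed

lemma Yt_inc: "incseq (Yt L)"
proof (rule incseq_SucI)
  fix T
  show "Yt L T \<subseteq> Yt L (Suc T)"
  proof
    fix \<omega> assume w: "\<omega> \<in> Yt L T"
    have "ties L T (L-1) (pre T \<omega>) \<le> ties L (Suc T) (L-1) (pre T \<omega>)"
      by (rule ties_monoU) simp
    also have "\<dots> \<le> ties L (Suc T) (L-1) (pre (Suc T) \<omega>)"
      unfolding pre_preL preL_Suc ties_append by simp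
    finally show "\<omega> \<in> Yt L (Suc T)" using w by (auto simp: Yt_def)
  qed
qed

lemma Bt_meas: "prob (Bt i T) \<le> 8 * (1/4)^i"
proof -
  have "prob (Bt i T) = measure_pmf.prob (replicate_pmf T p) {xs. 3*i-3 \<le> card (recs 0 xs \<inter> {..2^i})}"
    unfolding Bt_def using prob_pre_set[of T "{xs. 3*i-3 \<le> card (recs 0 xs \<inter> {..2^i})}"] by simp
  also have "\<dots> \<le> GA (2^i) 0 / 2 ^ (3*i-3)" by (rule markovA[OF pmf_p])
  also have "\<dots> \<le> 8 * (1/4)^i" using arithB[of i] by (simp add: GA_def)
  finally show ?thesis .
qed

lemma Yt_meas: "2 \<le> L \<Longrightarrow> prob (Yt L T) \<le> 2 / real (L - 1)"
proof -
  assume L: "2 \<le> L"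
  have "prob (Yt L T) = measure_pmf.prob (replicate_pmf T p) {xs. 1 \<le> ties L T (L-1) xs}"
    unfolding Yt_def using prob_pre_set[of T "{xs. 1 \<le> ties L T (L-1) xs}"] by simp
  also have "\<dots> \<le> 2 / real (L - 1)" by (rule markovB[OF pmf_p]) (use L in simp)
  finally show ?thesis .
qed

lemma B_meas: "prob (\<Union>T. Bt i T) \<le> 8 * (1/4)^i"
proof -
  have "(\<lambda>T. prob (Bt i T)) \<longlonglongrightarrow> prob (\<Union>T. Bt i T)"
    by (rule finite_Lim_measure_incseq) (auto simp: Bt_inc)
  then show ?thesis using Bt_meas by (intro LIMSEQ_le_const2) auto
qed

lemma Y_meas: "2 \<le> L \<Longrightarrow> prob (\<Union>T. Yt L T) \<le> 2 / real (L - 1)"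
proof -
  assume L: "2 \<le> L"
  have "(\<lambda>T. prob (Yt L T)) \<longlonglongrightarrow> prob (\<Union>T. Yt L T)"
    by (rule finite_Lim_measure_incseq) (auto simp: Yt_inc)
  then show ?thesis using Yt_meas[OF L] by (intro LIMSEQ_le_const2) auto
qed

lemma AE_rec: "AE \<omega> in M. eventually (\<lambda>i. \<omega> \<notin> (\<Union>T. Bt i T)) sequentially"
proof -
  have "AE \<omega> in M. eventually (\<lambda>i. \<omega> \<in> space M - (\<Union>T. Bt i T)) sequentially"
  proof (rule borel_cantelli_AE1)
    show "\<And>i. (\<Union>T. Bt i T) \<in> sets M" by measurable
    show "\<And>i. emeasure M (\<Union>T. Bt i T) < \<infinity>" by (simp add: less_top[symmetric])
    show "summable (\<lambda>i. prob (\<Union>T. Bt i T))"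
    proof (rule summable_comparison_test')
      show "summable (\<lambda>i. 8 * (1/4::real)^i)" by (intro summable_mult summable_geometric) simp
      show "norm (prob (\<Union>T. Bt i T)) \<le> 8 * (1/4)^i" for i using B_meas[of i] by simp
    qed
  qed
  then show ?thesis by (rule AE_mp) (auto intro!: AE_I2 elim: eventually_mono)
qed

lemma AE_ties: "AE \<omega> in M. \<exists>L\<ge>2. \<omega> \<notin> (\<Union>T. Yt L T)"
proof (rule AE_I[where N="\<Inter>L. (\<Union>T. Yt (L+2) T)"])
  show "{\<omega> \<in> space M. \<not> (\<exists>L\<ge>2. \<omega> \<notin> (\<Union>T. Yt L T))} \<subseteq> (\<Inter>L. (\<Union>T. Yt (L+2) T))"
    by auto
  show "(\<Inter>L. (\<Union>T. Yt (L+2) T)) \<in> sets M" by measurable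
  have bnd: "prob (\<Inter>L. (\<Union>T. Yt (L+2) T)) \<le> 2 / real (Suc L)" for L
  proof -
    have "prob (\<Inter>L. (\<Union>T. Yt (L+2) T)) \<le> prob (\<Union>T. Yt (L+2) T)"
      by (rule finite_measure_mono) (auto, measurable)
    also have "\<dots> \<le> 2 / real (L + 2 - 1)" by (rule Y_meas) simp
    finally show ?thesis by simp
  qed
  have "(\<lambda>L. 2 * inverse (real (Suc L))) \<longlonglongrightarrow> 2 * 0"
    by (intro tendsto_mult tendsto_const LIMSEQ_inverse_real_of_nat)
  then have "(\<lambda>L. 2 / real (Suc L)) \<longlonglongrightarrow> 0" by (simp add: divide_inverse)
  then have "prob (\<Inter>L. (\<Union>T. Yt (L+2) T)) \<le> 0"
    using bnd by (intro LIMSEQ_le_const) auto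
  then show "emeasure M (\<Inter>L. (\<Union>T. Yt (L+2) T)) = 0"
    by (simp add: emeasure_eq_measure measure_nonneg order.antisym)
qed

end

theorem lemma4:
  fixes M :: "'a measure" and k :: "nat \<Rightarrow> 'a \<Rightarrow> nat"
  assumes "prob_space M"
    and indep: "prob_space.indep_vars M (\<lambda>_. count_space UNIV) k {1..}"
    and vals: "\<And>n \<omega>. n \<ge> 1 \<Longrightarrow> \<omega> \<in> space M \<Longrightarrow> k n \<omega> \<ge> 1"
    and distr: "\<And>n m. n \<ge> 1 \<Longrightarrow> m \<ge> 1 \<Longrightarrow>
        measure M {\<omega> \<in> space M. k n \<omega> = m} = 1 / (real m * (real m + 1))"
  shows "AE \<omega> in M. eventually (\<lambda>j.
           (\<forall>n. record_time (\<lambda>i. k i \<omega>) j < n \<and> n < record_time (\<lambda>i. k i \<omega>) (Suc j)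
                 \<longrightarrow> k n \<omega> < k (record_time (\<lambda>i. k i \<omega>) j) \<omega>)
         \<and> real (k (record_time (\<lambda>i. k i \<omega>) j) \<omega>) > 2 powr (real j / 3)) sequentially"
proof -
  have S: "setting M k" unfolding setting_def setting_axioms_def using assms by auto
  interpret setting M k by (rule S)
  have "AE \<omega> in M. \<omega> \<in> space M \<and> (\<forall>L. \<exists>n. L < k (Suc n) \<omega>)
      \<and> eventually (\<lambda>i. \<omega> \<notin> (\<Union>T. Bt i T)) sequentially \<and> (\<exists>L\<ge>2. \<omega> \<notin> (\<Union>T. Yt L T))"
    using AE_space AE_unb AE_rec AE_ties by eventually_elim auto
  then show ?thesis
  proof (rule eventually_mono)
    fix \<omega> assume w: "\<omega> \<in> space M \<and> (\<forall>L. \<exists>n. L < k (Suc n) \<omega>)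
      \<and> eventually (\<lambda>i. \<omega> \<notin> (\<Union>T. Bt i T)) sequentially \<and> (\<exists>L\<ge>2. \<omega> \<notin> (\<Union>T. Yt L T))"
    then obtain L where L: "2 \<le> L" "\<omega> \<notin> (\<Union>T. Yt L T)" by blast
    show "eventually (\<lambda>j.
           (\<forall>n. record_time (\<lambda>i. k i \<omega>) j < n \<and> n < record_time (\<lambda>i. k i \<omega>) (Suc j)
                 \<longrightarrow> k n \<omega> < k (record_time (\<lambda>i. k i \<omega>) j) \<omega>)
         \<and> real (k (record_time (\<lambda>i. k i \<omega>) j) \<omega>) > 2 powr (real j / 3)) sequentially"
    proof (rule final_det[where f="\<lambda>i. k i \<omega>", OF _ _ _ L(1)])
      show "\<And>L. \<exists>n. L < k (Suc n) \<omega>" using w by blast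
      show "\<And>i. 1 \<le> i \<Longrightarrow> 1 \<le> k i \<omega>" using w vals by blast
      show "eventually (\<lambda>i. \<not> (\<exists>T. 3*i-3 \<le> card (recs 0 (preL (\<lambda>i. k i \<omega>) T) \<inter> {..2^i}))) sequentially"
        using w by (elim conjE) (erule eventually_mono, auto simp: Bt_def pre_preL)
      show "\<not> (\<exists>T. 1 \<le> ties L T (L-1) (preL (\<lambda>i. k i \<omega>) T))"
        using w L(2) by (auto simp: Yt_def pre_preL)
    qed
  qed
qed

end
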